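(* If a subshift $X$ has infinitely many significant blocks, then for every $n\in\mathbb N$, $n\ge1$, there exists a significant block of $X$ of length $n$.
   Context: Let $\mathcal A$ be a finite alphabet and $\sigma$ the shift, $(\sigma x)_i=x_{i+1}$. For a one-sided subshift $X^+\subseteq\mathcal A^{\mathbb N}$ (nonempty, closed, $\sigma$-invariant), the natural extension is $\tilde X=\{x\in\mathcal A^{\mathbb Z}: x_px_{p+1}\dots\in X^+\ \forall p\in\mathbb Z\}$; for a two-sided subshift $X$, $X^+$ is the set of right rays of its points and $\tilde X=X$. For a block $a_{-n}\dots a_0$ occurring in $\tilde X$, $\mathrm{fol}(a_{-n}\dots a_0)=\{b_0b_1\dots\in X^+:\exists b\in\tilde X,\ b_{-n}\dots b_0=a_{-n}\dots a_0\}$. A block $a_{-n}\dots a_0$ occurring in $\tilde X$ with $n\ge1$ is a significant block of $X$ if $\mathrm{fol}(a_{-n}\dots a_0)\subsetneq\mathrm{fol}(a_{-n+1}\dots a_0)$; single symbols occurring in $\tilde X$ are also counted as significant. *)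

theory Defs
  imports Main
begin

definition shift1 :: "(nat \<Rightarrow> 'a) \<Rightarrow> (nat \<Rightarrow> 'a)" where
  "shift1 x = (\<lambda>i. x (Suc i))"

text \<open>Closedness in the product topology of the discrete alphabet:
x belongs to X whenever every finite prefix of x is a prefix of some point of X.\<close>
definition closed_seqset :: "(nat \<Rightarrow> 'a) set \<Rightarrow> bool" where
  "closed_seqset X \<longleftrightarrow>
     (\<forall>x. (\<forall>N. \<exists>y\<in>X. \<forall>i<N. y i = x i) \<longrightarrow> x \<in> X)"

definition one_sided_subshift :: "(nat \<Rightarrow> 'a::finite) set \<Rightarrow> bool" where
  "one_sided_subshift X \<longleftrightarrow> X \<noteq> {} \<and> closed_seqset X \<and> shift1 ` X \<subseteq> X"

definition nat_ext :: "(nat \<Rightarrow> 'a) set \<Rightarrow> (int \<Rightarrow> 'a) set" where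
  "nat_ext Xp = {x. \<forall>p::int. (\<lambda>i::nat. x (p + int i)) \<in> Xp}"

definition occurs_in :: "(int \<Rightarrow> 'a) set \<Rightarrow> 'a list \<Rightarrow> bool" where
  "occurs_in Xt w \<longleftrightarrow> (\<exists>b\<in>Xt. \<exists>p::int. \<forall>i<length w. b (p + int i) = w ! i)"

text \<open>The follower set of a block a_{-n}..a_0 (the list [a_{-n},...,a_0]):
right rays b_0 b_1 ... of points b of the natural extension with
b_{-n}..b_0 = a_{-n}..a_0.\<close>
definition fol :: "(int \<Rightarrow> 'a) set \<Rightarrow> 'a list \<Rightarrow> (nat \<Rightarrow> 'a) set" where
  "fol Xt w = {(\<lambda>i::nat. b (int i)) | b. b \<in> Xt \<and>
      (\<forall>i<length w. b (int i - int (length w) + 1) = w ! i)}"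

definition significant_blocks :: "(nat \<Rightarrow> 'a) set \<Rightarrow> 'a list set" where
  "significant_blocks Xp =
     {w. occurs_in (nat_ext Xp) w \<and>
         (length w = 1 \<or> (length w \<ge> 2 \<and> fol (nat_ext Xp) w \<subset> fol (nat_ext Xp) (tl w)))}"

end

theory Submission
  imports Defs
begin

lemma nat_ext_shift:
  assumes "x \<in> nat_ext Xp"
  shows "(\<lambda>j. x (j + k)) \<in> nat_ext Xp"
proof -
  have "(\<lambda>i::nat. x (p + int i + k)) \<in> Xp" for p
  proof -
    have "(\<lambda>i::nat. x ((p + k) + int i)) \<in> Xp" using assms unfolding nat_ext_def by blast
    then show ?thesis by (simp add: algebra_simps)
  qed
  then show ?thesis unfolding nat_ext_def by auto
qed

lemma fol_memI:
  assumes "b \<in> Xt" "\<forall>i<length w. b (int i - int (length w) + 1) = w ! i"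
    "r = (\<lambda>i::nat. b (int i))"
  shows "r \<in> fol Xt w"
  unfolding fol_def using assms by blast

lemma sig_iff: "w \<in> significant_blocks Xp \<longleftrightarrow> occurs_in (nat_ext Xp) w \<and>
         (length w = 1 \<or> (length w \<ge> 2 \<and> fol (nat_ext Xp) w \<subset> fol (nat_ext Xp) (tl w)))"
  unfolding significant_blocks_def by (rule mem_Collect_eq)

lemma fol_tl_sub: "fol Xt w \<subseteq> fol Xt (tl w)"
proof
  fix r assume "r \<in> fol Xt w"
  then obtain b where r: "r = (\<lambda>i::nat. b (int i))" and b: "b \<in> Xt"
    and ag: "\<forall>i<length w. b (int i - int (length w) + 1) = w ! i"
    unfolding fol_def by blast
  have "\<forall>i<length (tl w). b (int i - int (length (tl w)) + 1) = tl w ! i"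
  proof (intro allI impI)
    fix i assume "i < length (tl w)"
    then have "Suc i < length w" by simp
    then have "b (int (Suc i) - int (length w) + 1) = w ! Suc i" using ag by blast
    moreover have "int (Suc i) - int (length w) = int i - int (length (tl w))"
      using \<open>Suc i < length w\<close> by simp
    moreover have "w ! Suc i = tl w ! i" using \<open>Suc i < length w\<close>
      by (simp add: nth_tl)
    ultimately show "b (int i - int (length (tl w)) + 1) = tl w ! i" by simp
  qed
  then show "r \<in> fol Xt (tl w)" using r b by (intro fol_memI) 
qed

lemma occurs_butlast:
  assumes "occurs_in Xt w" shows "occurs_in Xt (butlast w)"
proof -
  obtain b p where "b \<in> Xt" "\<forall>i<length w. b (p + int i) = w ! i"
    using assms unfolding occurs_in_def by blast
  then show ?thesis unfolding occurs_in_def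
    by (intro bexI[of _ b] exI[of _ p]) (auto simp: nth_butlast)
qed

lemma fol_snoc:
  assumes "u \<noteq> []"
  shows "r \<in> fol (nat_ext Xp) (u @ [s]) \<longleftrightarrow>
    r 0 = s \<and> (\<lambda>i. if i = 0 then last u else r (i - 1)) \<in> fol (nat_ext Xp) u"
proof
  define L where "L = length u"
  have L: "L \<ge> 1" using assms L_def by (cases u) auto
  assume "r \<in> fol (nat_ext Xp) (u @ [s])"
  then obtain b where r: "r = (\<lambda>i::nat. b (int i))" and b: "b \<in> nat_ext Xp"
    and ag: "\<forall>i<L+1. b (int i - int (L+1) + 1) = (u@[s]) ! i"
    unfolding fol_def L_def by auto
  have "b 0 = s" using ag[rule_format, of L] by (simp add: L_def)
  define b' where "b' = (\<lambda>j. b (j + (-1)))"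
  have b': "b' \<in> nat_ext Xp" unfolding b'_def by (rule nat_ext_shift[OF b])
  have ag': "\<forall>i<length u. b' (int i - int (length u) + 1) = u ! i"
  proof (intro allI impI)
    fix i assume "i < length u"
    then have "b (int i - int (L+1) + 1) = (u@[s]) ! i" using ag L_def by auto
    then show "b' (int i - int (length u) + 1) = u ! i"
      unfolding b'_def L_def using \<open>i < length u\<close> by (simp add: nth_append algebra_simps)
  qed
  have "last u = u ! (L - 1)" using assms L_def by (simp add: last_conv_nth)
  also have "\<dots> = b (-1)"
  proof -
    have l1: "L - 1 < L + 1" "L - 1 < length u" using L L_def by auto
    have "b (int (L-1) - int (L+1) + 1) = (u@[s])!(L-1)" using ag l1(1) by blast
    moreover have "(u@[s]) ! (L-1) = u!(L-1)" using l1(2) by (simp add: nth_append)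
    moreover have "int (L-1) - int (L+1) + 1 = -1" using L by simp
    ultimately show ?thesis by simp
  qed
  finally have lu: "last u = b (-1)" .
  have "(\<lambda>i. if i = 0 then last u else r (i - 1)) = (\<lambda>i::nat. b' (int i))"
  proof
    fix i :: nat show "(if i = 0 then last u else r (i - 1)) = b' (int i)"
      using lu unfolding r b'_def by (cases i) auto
  qed
  then have "(\<lambda>i. if i = 0 then last u else r (i - 1)) \<in> fol (nat_ext Xp) u"
    using b' ag' by (intro fol_memI)
  then show "r 0 = s \<and> (\<lambda>i. if i = 0 then last u else r (i - 1)) \<in> fol (nat_ext Xp) u"
    using \<open>b 0 = s\<close> r by simp
next
  assume A: "r 0 = s \<and> (\<lambda>i. if i = 0 then last u else r (i - 1)) \<in> fol (nat_ext Xp) u"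
  then obtain b where c: "(\<lambda>i. if i = 0 then last u else r (i - 1)) = (\<lambda>i::nat. b (int i))"
    and b: "b \<in> nat_ext Xp"
    and ag: "\<forall>i<length u. b (int i - int (length u) + 1) = u ! i"
    unfolding fol_def by blast
  define b' where "b' = (\<lambda>j. b (j + 1))"
  have b': "b' \<in> nat_ext Xp" unfolding b'_def by (rule nat_ext_shift[OF b])
  have rr: "r i = b' (int i)" for i
    using fun_cong[OF c, of "Suc i"] unfolding b'_def by (simp add: add.commute)
  have ag': "\<forall>i<length (u@[s]). b' (int i - int (length (u@[s])) + 1) = (u@[s]) ! i"
  proof (intro allI impI)
    fix i assume i: "i < length (u@[s])"
    show "b' (int i - int (length (u@[s])) + 1) = (u@[s]) ! i"
    proof (cases "i < length u")
      case True
      then show ?thesis using ag unfolding b'_def by (simp add: nth_append algebra_simps)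
    next
      case False
      then have "i = length u" using i by simp
      then have e: "int i - int (length (u@[s])) + 1 = 0" by simp
      have "(u@[s]) ! i = s" using \<open>i = length u\<close> by simp
      moreover have "b' 0 = s" using rr[of 0] A by simp
      ultimately show ?thesis unfolding e by simp
    qed
  qed
  have "r = (\<lambda>i::nat. b' (int i))" using rr by (rule ext)
  then show "r \<in> fol (nat_ext Xp) (u @ [s])" using b' ag' by (intro fol_memI)
qed

lemma key:
  assumes n2: "n \<ge> 2"
    and H: "\<forall>u. length u = n \<and> occurs_in (nat_ext Xp) u \<longrightarrow>
               fol (nat_ext Xp) u = fol (nat_ext Xp) (tl u)"
  shows "length v = n + k \<Longrightarrow> occurs_in (nat_ext Xp) v \<Longrightarrow>
           fol (nat_ext Xp) v = fol (nat_ext Xp) (tl v)"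
proof (induction k arbitrary: v)
  case 0 then show ?case using H by simp
next
  case (Suc k)
  define u where "u = butlast v"
  define s where "s = last v"
  have vne: "v \<noteq> []" using Suc.prems by auto
  have v: "v = u @ [s]" using vne unfolding u_def s_def by simp
  have lu: "length u = n + k" using Suc.prems unfolding u_def by simp
  have ou: "occurs_in (nat_ext Xp) u" unfolding u_def by (rule occurs_butlast[OF Suc.prems(2)])
  have IH: "fol (nat_ext Xp) u = fol (nat_ext Xp) (tl u)" using Suc.IH lu ou by blast
  have une: "u \<noteq> []" and tune: "tl u \<noteq> []" using lu n2 by (auto simp: length_0_conv[symmetric])
  have lt: "last (tl u) = last u" using tune by (cases u) auto
  have tv: "tl v = tl u @ [s]" using v une by (cases u) auto
  have "fol (nat_ext Xp) (u @ [s]) = fol (nat_ext Xp) (tl u @ [s])"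
  proof (rule set_eqI)
    fix r
    show "r \<in> fol (nat_ext Xp) (u @ [s]) \<longleftrightarrow> r \<in> fol (nat_ext Xp) (tl u @ [s])"
      unfolding fol_snoc[OF une] fol_snoc[OF tune] IH lt ..
  qed
  then show ?case using v tv by simp
qed

theorem proposition3p10:
  fixes Xp :: "(nat \<Rightarrow> 'a::finite) set"
  assumes "one_sided_subshift Xp"
    and "infinite (significant_blocks Xp)"
    and "(n::nat) \<ge> 1"
  shows "\<exists>w\<in>significant_blocks Xp. length w = n"
proof (cases "n = 1")
  case True
  obtain w where w: "w \<in> significant_blocks Xp" using assms(2) by (metis finite.emptyI ex_in_conv)
  then have ow: "occurs_in (nat_ext Xp) w" and lw: "length w \<ge> 1"
    unfolding sig_iff by auto
  then obtain b p where "b \<in> nat_ext Xp" "\<forall>i<length w. b (p + int i) = w ! i"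
    unfolding occurs_in_def by blast
  moreover have "b (p + int 0) = w ! 0" using spec[OF calculation(2), of 0] lw by (cases w) auto
  ultimately have "occurs_in (nat_ext Xp) [w ! 0]" unfolding occurs_in_def
    by (intro bexI[of _ b] exI[of _ p]) auto
  then have "[w ! 0] \<in> significant_blocks Xp" unfolding sig_iff by simp
  then show ?thesis using True by force
next
  case False
  then have n2: "n \<ge> 2" using assms(3) by simp
  show ?thesis
  proof (rule ccontr)
    assume nn: "\<not> ?thesis"
    have H: "\<forall>u. length u = n \<and> occurs_in (nat_ext Xp) u \<longrightarrow>
               fol (nat_ext Xp) u = fol (nat_ext Xp) (tl u)"
    proof (intro allI impI)
      fix u :: "'a list" assume u: "length u = n \<and> occurs_in (nat_ext Xp) u"
      then have "u \<notin> significant_blocks Xp" using nn by blast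
      then have "\<not> fol (nat_ext Xp) u \<subset> fol (nat_ext Xp) (tl u)"
        using u n2 unfolding sig_iff by simp
      then show "fol (nat_ext Xp) u = fol (nat_ext Xp) (tl u)" using fol_tl_sub by blast
    qed
    have "significant_blocks Xp \<subseteq> {xs. set xs \<subseteq> UNIV \<and> length xs \<le> n}"
    proof
      fix w assume w: "w \<in> significant_blocks Xp"
      show "w \<in> {xs. set xs \<subseteq> UNIV \<and> length xs \<le> n}"
      proof (rule ccontr)
        assume "w \<notin> {xs. set xs \<subseteq> UNIV \<and> length xs \<le> n}"
        then have ln: "length w = n + (length w - n)" by simp
        have ow: "occurs_in (nat_ext Xp) w" using w unfolding sig_iff by simp
        have "fol (nat_ext Xp) w = fol (nat_ext Xp) (tl w)" by (rule key[OF n2 H ln ow])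
        moreover have "length w \<noteq> 1" using \<open>w \<notin> _\<close> n2 by auto
        ultimately show False using w unfolding sig_iff by simp
      qed
    qed
    moreover have "finite {xs::'a list. set xs \<subseteq> UNIV \<and> length xs \<le> n}"
      by (rule finite_lists_length_le) simp
    ultimately show False using assms(2) finite_subset by blast
  qed
qed

end
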